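(* Let $\Omega_1=\{(u,v)\in\mathbb{C}^2: |u^2|+|v^2|-1<|u^2+v^2-1|\}$. Then $\{1-u^2-v^2:(u,v)\in\Omega_1\}\subset\mathbb{C}-(-\infty,0]$. *)

theory Defs
  imports "HOL-Analysis.Analysis"
begin

definition Omega1 :: "(complex \<times> complex) set" where
  "Omega1 = {(u, v). cmod (u\<^sup>2) + cmod (v\<^sup>2) - 1 < cmod (u\<^sup>2 + v\<^sup>2 - 1)}"

end

theory Submission
  imports Defs
begin

lemma key:
  fixes a b :: complex and r :: real
  assumes r: "r \<le> 0" and eq: "1 - a - b = complex_of_real r"
  shows "cmod a + cmod b - 1 \<ge> cmod (a + b - 1)"
proof -
  have s: "a + b = complex_of_real (1 - r)" using eq by (simp add: algebra_simps)
  have "a + b - 1 = complex_of_real (- r)" using s by simp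
  then have n1: "cmod (a + b - 1) = - r" using r by simp
  have "cmod (a + b) = \<bar>1 - r\<bar>" by (simp only: s norm_of_real)
  then have n2: "cmod (a + b) = 1 - r" using r by simp
  have "cmod (a + b) \<le> cmod a + cmod b" by (rule norm_triangle_ineq)
  then show ?thesis using n1 n2 by linarith
qed

theorem lemma4p5:
  shows "(\<lambda>(u, v). 1 - u\<^sup>2 - v\<^sup>2) ` Omega1 \<subseteq> UNIV - complex_of_real ` {..0}"
proof
  fix z assume "z \<in> (\<lambda>(u, v). 1 - u\<^sup>2 - v\<^sup>2) ` Omega1"
  then obtain u v where uv: "(u, v) \<in> Omega1" and z: "z = 1 - u\<^sup>2 - v\<^sup>2" by auto
  have "z \<notin> complex_of_real ` {..0}"
  proof
    assume "z \<in> complex_of_real ` {..0}"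
    then obtain r where r: "r \<le> 0" "z = complex_of_real r" by auto
    have "cmod (u\<^sup>2) + cmod (v\<^sup>2) - 1 \<ge> cmod (u\<^sup>2 + v\<^sup>2 - 1)"
      using key[of r "u\<^sup>2" "v\<^sup>2"] r z by simp
    then show False using uv unfolding Omega1_def by simp
  qed
  then show "z \<in> UNIV - complex_of_real ` {..0}" by simp
qed

end
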